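(* Consider the robot rendezvous system $$\dot{x}_k(t)=x_{k-1}(t)-x_k(t),\quad k\in\mathbb{Z},\ t\ge0,$$ with initial constellation $x_0=(x_k(0))_{k\in\mathbb{Z}}\in\ell^\infty(\mathbb{Z})$. Then $x_0$ is good if and only if there exists $c\in\mathbb{C}$ such that $$\sup_{k\in\mathbb{Z}}\bigg|\frac{1}{n}\sum_{j=1}^n x_{k-j}(0)-c\bigg|\to0\quad\text{as } n\to\infty.$$ Moreover, if this holds, then $\sup_{k\in\mathbb{Z}}|x_k(t)-c|\to0$ as $t\to\infty$.
   Context: $\ell^\infty(\mathbb{Z})$ is the Banach space of bounded doubly infinite complex sequences with the supremum norm. $S$ denotes the right-shift operator on $\ell^\infty(\mathbb{Z})$, $S(x_k)=(x_{k-1})$. For $x_0\in\ell^\infty(\mathbb{Z})$, the solution of the system is $x(t)=(x_k(t))_{k\in\mathbb{Z}}=\exp(t(S-I))x_0$, $t\ge0$. An initial constellation $x_0\in\ell^\infty(\mathbb{Z})$ is called good if there exist constants $c_k\in\mathbb{C}$, $k\in\mathbb{Z}$, such that the corresponding solution satisfies $\sup_{k\in\mathbb{Z}}|x_k(t)-c_k|\to0$ as $t\to\infty$. *)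

theory Defs
  imports "HOL-Analysis.Analysis"
begin

text \<open>Elements of l-infinity(Z) are represented as functions int => complex that are
  bounded, i.e. bounded (range x).  The right shift S and the generator S - I.\<close>

definition rshift :: "(int \<Rightarrow> complex) \<Rightarrow> int \<Rightarrow> complex" where
  "rshift x = (\<lambda>k. x (k - 1))"

definition gen :: "(int \<Rightarrow> complex) \<Rightarrow> int \<Rightarrow> complex" where
  "gen x = (\<lambda>k. rshift x k - x k)"

text \<open>The solution x(t) = exp(t(S - I)) x0, written out as the exponential series
  sum_n t^n/n! (S - I)^n x0, evaluated coordinatewise (coordinate evaluation is
  continuous on l-infinity, so this equals the k-th coordinate of the norm-convergent
  operator series).\<close>

definition sol :: "(int \<Rightarrow> complex) \<Rightarrow> real \<Rightarrow> int \<Rightarrow> complex" where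
  "sol x0 t k = (\<Sum>n. complex_of_real (t ^ n / fact n) * (gen ^^ n) x0 k)"

definition good :: "(int \<Rightarrow> complex) \<Rightarrow> bool" where
  "good x0 \<longleftrightarrow> (\<exists>c :: int \<Rightarrow> complex. uniform_limit UNIV (sol x0) c at_top)"

end

theory Submission imports Defs "HOL-Real_Asymp.Real_Asymp" begin



definition pw :: "real \<Rightarrow> nat \<Rightarrow> real" where
  "pw t i = exp (-t) * t ^ i / fact i"

lemma pw_nonneg: "t \<ge> 0 \<Longrightarrow> pw t i \<ge> 0"
  by (simp add: pw_def)

lemma pw_sums: "(\<lambda>i. pw t i) sums 1"
proof -
  have "(\<lambda>n. t^n / fact n) sums exp t"
    using exp_converges[of t] by (simp add: divide_inverse mult.commute)
  from sums_mult[OF this, of "exp (-t)"] show ?thesis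
    by (simp add: pw_def exp_minus field_simps)
qed

lemma pw_Suc: "pw t (Suc n) = t * pw t n / real (Suc n)"
  by (simp add: pw_def field_simps)

lemma pw_m1_sums: "(\<lambda>i. real i * pw t i) sums t"
proof -
  have "(\<lambda>n. real (Suc n) * pw t (Suc n)) sums (t * 1)"
    using sums_mult[OF pw_sums[of t], of t] by (simp add: pw_Suc)
  from sums_Suc[OF this] show ?thesis by simp
qed

lemma pw_m2_sums: "(\<lambda>i. real i * real i * pw t i) sums (t^2 + t)"
proof -
  define g where "g i = real i * (real i - 1) * pw t i" for i
  have "(\<lambda>n. g (Suc (Suc n))) sums (t^2 * 1)"
    using sums_mult[OF pw_sums[of t], of "t^2"] by (simp add: g_def pw_Suc power2_eq_square mult.assoc)
  hence "(\<lambda>n. g (Suc n)) sums (t^2 * 1 + g (Suc 0))"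
    by (rule sums_Suc[where f="\<lambda>n. g (Suc n)"])
  hence "g sums (t^2 * 1 + g (Suc 0) + g 0)" by (rule sums_Suc)
  hence "(\<lambda>i. real i * (real i - 1) * pw t i) sums (t^2)"
    by (simp add: g_def[abs_def])
  from sums_add[OF this pw_m1_sums[of t]] show ?thesis
    by (simp add: algebra_simps)
qed

lemma pw_var_sums: "(\<lambda>i. (real i - t)^2 * pw t i) sums t"
proof -
  have a: "(\<lambda>i. 2 * t * (real i * pw t i)) sums (2*t*t)" by (rule sums_mult[OF pw_m1_sums[of t]])
  have b: "(\<lambda>i. t^2 * pw t i) sums (t^2*1)" by (rule sums_mult[OF pw_sums[of t]])
  from sums_add[OF sums_diff[OF pw_m2_sums[of t] a] b] show ?thesis
    by (simp add: power2_eq_square algebra_simps)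
qed

lemma pw_abs_dev:
  assumes t: "t > 0"
  shows "summable (\<lambda>i. \<bar>real i - t\<bar> * pw t i) \<and> (\<Sum>i. \<bar>real i - t\<bar> * pw t i) \<le> sqrt t"
proof -
  define s where "s = sqrt t"
  have s: "s > 0" "s * s = t" using t by (auto simp: s_def)
  have le: "\<bar>x\<bar> \<le> (x^2/s + s)/2" for x :: real
  proof -
    have "0 \<le> (\<bar>x\<bar> - s)^2" by simp
    hence "2 * s * \<bar>x\<bar> \<le> x^2 + s * s" by (simp add: power2_eq_square algebra_simps)
    thus ?thesis using s(1) by (simp add: field_simps power2_eq_square)
  qed
  have sg: "(\<lambda>i. ((real i - t)^2 * pw t i / s + s * pw t i)/2) sums ((t/s + s*1)/2)"
    by (intro sums_divide sums_add sums_mult pw_var_sums[of t] pw_sums[of t])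
  have bnd: "\<bar>real i - t\<bar> * pw t i \<le> ((real i - t)^2 * pw t i / s + s * pw t i)/2" for i
    using mult_right_mono[OF le[of "real i - t"] pw_nonneg[of t i]] t
    by (simp add: field_simps)
  have sm: "summable (\<lambda>i. \<bar>real i - t\<bar> * pw t i)"
    by (rule summable_comparison_test'[OF sums_summable[OF sg], of 0]) (use bnd pw_nonneg t in auto)
  have "(\<Sum>i. \<bar>real i - t\<bar> * pw t i) \<le> (t/s + s*1)/2"
    using sums_le[OF bnd summable_sums[OF sm] sg] .
  also have "\<dots> = sqrt t" using s by (simp add: s_def field_simps)
  finally show ?thesis using sm by blast
qed

definition V :: "real \<Rightarrow> real" where
  "V t = pw t 0 + (\<Sum>i. \<bar>pw t (Suc i) - pw t i\<bar>)"

lemma V_bound: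
  assumes t: "t > 0"
  shows "summable (\<lambda>i. \<bar>pw t (Suc i) - pw t i\<bar>) \<and> V t \<le> exp (-t) + 1 / sqrt t"
proof -
  define h where "h i = \<bar>real i - t\<bar> * pw t i" for i
  from pw_abs_dev[OF t] have hs: "summable h" and hl: "suminf h \<le> sqrt t" by (auto simp: h_def[abs_def])
  have eq: "\<bar>pw t (Suc i) - pw t i\<bar> = h (Suc i) / t" for i
  proof -
    have "pw t i = pw t (Suc i) * real (Suc i) / t" using t by (simp add: pw_Suc)
    hence "pw t (Suc i) - pw t i = pw t (Suc i) * (t - real (Suc i)) / t"
      using t by (simp add: field_simps)
    thus ?thesis using t pw_nonneg[of t "Suc i"] by (simp add: h_def abs_mult abs_minus_commute)
  qed
  have hS: "(\<lambda>i. h (Suc i)) sums (suminf h - h 0)"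
    using sums_Suc_iff[of h "suminf h - h 0"] summable_sums[OF hs] by simp
  have s2: "(\<lambda>i. \<bar>pw t (Suc i) - pw t i\<bar>) sums ((suminf h - h 0)/t)"
    unfolding eq by (rule sums_divide[OF hS])
  have "h 0 \<ge> 0" using t by (simp add: h_def pw_nonneg)
  hence "(suminf h - h 0)/t \<le> sqrt t / t" using hl t by (simp add: divide_right_mono)
  also have "sqrt t / t = 1 / sqrt t" using t
    by (metis real_div_sqrt less_eq_real_def div_by_1 divide_divide_eq_right mult.commute times_divide_eq_left sqrt_divide_self_eq)
  finally have "(suminf h - h 0)/t \<le> 1 / sqrt t" .
  moreover have "pw t 0 = exp (-t)" by (simp add: pw_def)
  ultimately show ?thesis using s2 by (auto simp: V_def sums_iff)
qed

lemma V_small: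
  assumes "e > 0"
  shows "\<forall>\<^sub>F t in at_top. t > 0 \<and> V t < e"
proof -
  have "((\<lambda>t::real. exp (-t) + 1 / sqrt t) \<longlongrightarrow> 0) at_top" by real_asymp
  hence "\<forall>\<^sub>F t in at_top. exp (-t) + 1 / sqrt t < e"
    using assms by (simp add: order_tendsto_iff)
  moreover have "\<forall>\<^sub>F t in at_top. (t::real) > 0" by (rule eventually_gt_at_top)
  ultimately show ?thesis
    by eventually_elim (use V_bound in fastforce)
qed



definition P :: "real \<Rightarrow> (int \<Rightarrow> complex) \<Rightarrow> int \<Rightarrow> complex" where
  "P t y k = (\<Sum>i. complex_of_real (pw t i) * y (k - int i))"

lemma P_summable:
  assumes t: "t \<ge> 0" and B: "\<And>m. norm (y m) \<le> B"
  shows "summable (\<lambda>i. norm (complex_of_real (pw t i) * y (k - int i)))"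
proof (rule summable_comparison_test'[of "\<lambda>i. pw t i * B" 0])
  show "summable (\<lambda>i. pw t i * B)" using sums_summable[OF sums_mult2[OF pw_sums[of t]]] .
  fix i
  show "norm (norm (complex_of_real (pw t i) * y (k - int i))) \<le> pw t i * B"
    using pw_nonneg[OF t, of i] B[of "k - int i"] by (simp add: norm_mult mult_left_mono)
qed

lemma P_sums:
  assumes t: "t \<ge> 0" and B: "\<And>m. norm (y m) \<le> B"
  shows "(\<lambda>i. complex_of_real (pw t i) * y (k - int i)) sums P t y k"
  unfolding P_def using summable_norm_cancel[OF P_summable[OF t B]] by (rule summable_sums)

lemma pw_c_sums: "(\<lambda>i. complex_of_real (pw t i) * c) sums c"
proof -
  have "(\<lambda>i. complex_of_real (pw t i)) sums complex_of_real 1"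
    using pw_sums[of t] by (simp only: sums_of_real_iff)
  from sums_mult2[OF this, of c] show ?thesis by simp
qed

lemma P_close:
  assumes t: "t \<ge> 0" and e: "\<And>m. norm (y m - c) \<le> e"
  shows "norm (P t y k - c) \<le> e"
proof -
  have B: "norm (y m) \<le> e + norm c" for m
    using e[of m] norm_triangle_ineq2[of "y m" c] by linarith
  have s: "(\<lambda>i. complex_of_real (pw t i) * (y (k - int i) - c)) sums (P t y k - c)"
    using sums_diff[OF P_sums[OF t B, where k=k] pw_c_sums[of t c]] by (simp add: algebra_simps)
  have sn: "summable (\<lambda>i. norm (complex_of_real (pw t i) * (y (k - int i) - c)))"
  proof (rule summable_comparison_test'[of "\<lambda>i. pw t i * e" 0])
    show "summable (\<lambda>i. pw t i * e)" using sums_summable[OF sums_mult2[OF pw_sums[of t]]] .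
    fix i
    show "norm (norm (complex_of_real (pw t i) * (y (k - int i) - c))) \<le> pw t i * e"
      using pw_nonneg[OF t, of i] e[of "k - int i"] by (simp add: norm_mult mult_left_mono)
  qed
  have "norm (P t y k - c) \<le> (\<Sum>i. norm (complex_of_real (pw t i) * (y (k - int i) - c)))"
    using summable_norm[OF sn] s by (simp add: sums_iff)
  also have "\<dots> \<le> (\<Sum>i. pw t i * e)"
    apply (rule suminf_le[OF _ sn])
    using pw_nonneg[OF t] e apply (simp add: norm_mult mult_left_mono)
    using sums_summable[OF sums_mult2[OF pw_sums[of t]]] .
  also have "\<dots> = e" using sums_unique[OF sums_mult2[OF pw_sums[of t], of e]] by simp
  finally show ?thesis .
qed

lemma P_shift:
  assumes t: "t > 0" and B: "\<And>m. norm (y m) \<le> B"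
  shows "norm (P t y k - P t y (k - 1)) \<le> B * V t"
proof -
  have t0: "t \<ge> 0" using t by simp
  define a where "a i = complex_of_real (pw t i) * y (k - int i)" for i
  define b where "b i = complex_of_real (pw t i) * y (k - 1 - int i)" for i
  have sa: "a sums P t y k" using P_sums[OF t0 B] by (simp add: a_def[abs_def])
  have sb: "b sums P t y (k - 1)" using P_sums[OF t0 B] by (simp add: b_def[abs_def])
  have saS: "(\<lambda>i. a (Suc i)) sums (P t y k - a 0)"
    using sums_Suc_iff[of a "P t y k - a 0"] sa by simp
  have d: "(\<lambda>i. a (Suc i) - b i) sums (P t y k - a 0 - P t y (k - 1))"
    by (rule sums_diff[OF saS sb])
  have eqd: "a (Suc i) - b i = complex_of_real (pw t (Suc i) - pw t i) * y (k - 1 - int i)" for i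
    by (simp add: a_def b_def algebra_simps)
  from V_bound[OF t] have vs: "summable (\<lambda>i. \<bar>pw t (Suc i) - pw t i\<bar>)" by blast
  have B0: "B \<ge> 0" using norm_ge_zero[of "y 0"] B[of 0] by linarith
  have sn: "summable (\<lambda>i. norm (a (Suc i) - b i))"
  proof (rule summable_comparison_test'[of "\<lambda>i. \<bar>pw t (Suc i) - pw t i\<bar> * B" 0])
    show "summable (\<lambda>i. \<bar>pw t (Suc i) - pw t i\<bar> * B)" using summable_mult2[OF vs] .
    fix i show "norm (norm (a (Suc i) - b i)) \<le> \<bar>pw t (Suc i) - pw t i\<bar> * B"
      unfolding eqd norm_mult norm_of_real using B[of "k - 1 - int i"]
      by (simp add: mult_left_mono)
  qed
  have "norm (P t y k - a 0 - P t y (k - 1)) \<le> (\<Sum>i. norm (a (Suc i) - b i))"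
    using summable_norm[OF sn] d by (simp add: sums_iff)
  also have "\<dots> \<le> (\<Sum>i. \<bar>pw t (Suc i) - pw t i\<bar> * B)"
    apply (rule suminf_le[OF _ sn])
    unfolding eqd norm_mult norm_of_real using B apply (simp add: mult_left_mono)
    using summable_mult2[OF vs] .
  also have "\<dots> = (\<Sum>i. \<bar>pw t (Suc i) - pw t i\<bar>) * B" using suminf_mult2[OF vs] by simp
  finally have 1: "norm (P t y k - a 0 - P t y (k - 1)) \<le> (\<Sum>i. \<bar>pw t (Suc i) - pw t i\<bar>) * B" .
  have 2: "norm (a 0) \<le> pw t 0 * B" using B[of k] pw_nonneg[OF t0, of 0]
    by (simp add: a_def norm_mult mult_left_mono)
  have "norm (P t y k - P t y (k - 1)) \<le> norm (a 0) + norm (P t y k - a 0 - P t y (k - 1))"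
    using norm_triangle_ineq[of "a 0" "P t y k - a 0 - P t y (k - 1)"] by simp
  also have "\<dots> \<le> B * V t" using 1 2 by (simp add: V_def algebra_simps)
  finally show ?thesis .
qed

lemma P_shift_j:
  assumes t: "t > 0" and B: "\<And>m. norm (y m) \<le> B"
  shows "norm (P t y k - P t y (k - int j)) \<le> real j * (B * V t)"
proof (induction j)
  case 0 then show ?case by simp
next
  case (Suc j)
  have "norm (P t y k - P t y (k - int (Suc j))) \<le>
        norm (P t y k - P t y (k - int j)) + norm (P t y (k - int j) - P t y (k - int j - 1))"
    using norm_triangle_ineq[of "P t y k - P t y (k - int j)" "P t y (k - int j) - P t y (k - int j - 1)"]
    by (simp add: algebra_simps)
  also have "\<dots> \<le> real j * (B * V t) + B * V t"
    using Suc P_shift[where y=y and B=B and k="k - int j", OF t B] by linarith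
  finally show ?case by (simp add: algebra_simps)
qed



definition dc :: "nat \<Rightarrow> nat \<Rightarrow> complex" where
  "dc n i = of_nat (n choose i) * (-1) ^ (n - i)"

lemma dc_Suc_Suc: "dc (Suc n) (Suc i) = dc n i - dc n (Suc i)"
proof (cases "i < n")
  case True
  then have "n - i = Suc (n - Suc i)" by simp
  then show ?thesis using True by (simp add: dc_def algebra_simps)
next
  case False
  then show ?thesis by (simp add: dc_def)
qed

lemma dc_Suc_0: "dc (Suc n) 0 = - dc n 0"
  by (simp add: dc_def)

lemma dc_over: "dc n (Suc n) = 0"
  by (simp add: dc_def)

lemma gen_pow: "(gen ^^ n) y k = (\<Sum>i\<le>n. dc n i * y (k - int i))"
proof (induction n arbitrary: k)
  case 0
  then show ?case by (simp add: dc_def)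
next
  case (Suc n)
  have e1: "(\<Sum>i\<le>n. dc n i * y (k - int i)) = dc n 0 * y k + (\<Sum>i\<le>n. dc n (Suc i) * y (k - 1 - int i))"
  proof -
    have "(\<Sum>i\<le>n. dc n i * y (k - int i)) = (\<Sum>i\<le>Suc n. dc n i * y (k - int i))"
      by (simp add: dc_over)
    also have "\<dots> = dc n 0 * y k + (\<Sum>i\<le>n. dc n (Suc i) * y (k - int (Suc i)))"
      by (subst sum.atMost_Suc_shift) simp
    finally show ?thesis by (simp add: algebra_simps)
  qed
  have "(gen ^^ Suc n) y k = (gen ^^ n) y (k - 1) - (gen ^^ n) y k"
    by (simp add: gen_def rshift_def)
  also have "\<dots> = (\<Sum>i\<le>n. dc n i * y (k - 1 - int i)) - (dc n 0 * y k + (\<Sum>i\<le>n. dc n (Suc i) * y (k - 1 - int i)))"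
    using Suc e1 by simp
  also have "\<dots> = dc (Suc n) 0 * y k + (\<Sum>i\<le>n. dc (Suc n) (Suc i) * y (k - int (Suc i)))"
    by (simp add: dc_Suc_Suc dc_Suc_0 sum_subtractf algebra_simps)
  also have "\<dots> = (\<Sum>i\<le>Suc n. dc (Suc n) i * y (k - int i))"
    by (subst sum.atMost_Suc_shift) simp
  finally show ?case .
qed

lemma sol_eq_P:
  assumes t: "t \<ge> 0" and B: "\<And>m. norm (y m) \<le> B"
  shows "sol y t k = P t y k"
proof -
  define a where "a i = complex_of_real (t ^ i / fact i) * y (k - int i)" for i
  define b where "b i = complex_of_real ((-t) ^ i / fact i)" for i
  have ex: "(\<lambda>n. x^n / fact n) sums exp x" for x :: real
    using exp_converges[of x] by (simp add: divide_inverse mult.commute)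
  have sa: "summable (\<lambda>i. norm (a i))"
  proof (rule summable_comparison_test'[of "\<lambda>i. t^i / fact i * B" 0])
    show "summable (\<lambda>i. t^i / fact i * B)" using sums_summable[OF sums_mult2[OF ex[of t]]] .
    fix i show "norm (norm (a i)) \<le> t ^ i / fact i * B"
    proof -
      have "norm (a i) = t ^ i / fact i * norm (y (k - int i))"
        unfolding a_def norm_mult norm_of_real using t by simp
      moreover have "t ^ i / fact i * norm (y (k - int i)) \<le> t ^ i / fact i * B"
        using B[of "k - int i"] t by (intro mult_left_mono) auto
      ultimately show ?thesis using t by simp
    qed
  qed
  have sb: "summable (\<lambda>i. norm (b i))"
  proof -
    have "norm (b i) = t^i / fact i" for i unfolding b_def norm_of_real using t
      by (simp add: power_abs)
    thus ?thesis using sums_summable[OF ex[of t]] by simp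
  qed
  have bsum: "(\<Sum>i. b i) = complex_of_real (exp (-t))"
  proof -
    have "b sums complex_of_real (exp (-t))" using ex[of "-t"] unfolding b_def by (simp only: sums_of_real_iff)
    thus ?thesis by (simp add: sums_iff)
  qed
  have cp: "(\<lambda>n. \<Sum>i\<le>n. a i * b (n - i)) sums ((\<Sum>i. a i) * (\<Sum>i. b i))"
    by (rule Cauchy_product_sums[OF sa sb])
  have tm: "(\<Sum>i\<le>n. a i * b (n - i)) = complex_of_real (t ^ n / fact n) * (gen ^^ n) y k" for n
  proof -
    have "a i * b (n - i) = complex_of_real (t ^ n / fact n) * (dc n i * y (k - int i))" if "i \<le> n" for i
    proof -
      have f: "(fact n :: real) / (fact i * fact (n - i)) = of_nat (n choose i)"
        using binomial_fact[OF that, where ?'a=real] by simp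
      have p: "t ^ i * (-t) ^ (n - i) = (-1) ^ (n - i) * t ^ n"
      proof -
        have "(-t) ^ (n - i) = (-1) ^ (n - i) * t ^ (n - i)" by (rule power_minus)
        moreover have "t ^ i * t ^ (n - i) = t ^ n" using that by (simp flip: power_add)
        ultimately show ?thesis by (simp add: ac_simps)
      qed
      have r: "t ^ i / fact i * ((-t) ^ (n - i) / fact (n - i)) = t ^ n / fact n * (of_nat (n choose i) * (-1) ^ (n - i))"
      proof -
        have "t ^ i / fact i * ((-t) ^ (n - i) / fact (n - i)) = (t ^ i * (-t) ^ (n - i)) / (fact i * fact (n - i))"
          by simp
        also have "\<dots> = (-1) ^ (n - i) * t ^ n / (fact i * fact (n - i))" by (simp only: p)
        also have "\<dots> = t ^ n / fact n * ((fact n / (fact i * fact (n - i))) * (-1) ^ (n - i))"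
          by (simp add: field_simps)
        finally show ?thesis by (simp only: f)
      qed
      have c: "complex_of_real (t ^ i / fact i) * complex_of_real ((-t) ^ (n - i) / fact (n - i)) =
               complex_of_real (t ^ n / fact n) * (of_nat (n choose i) * (-1) ^ (n - i))"
        using arg_cong[OF r, of complex_of_real] by simp
      have "a i * b (n - i) = (complex_of_real (t ^ i / fact i) * complex_of_real ((-t) ^ (n - i) / fact (n - i))) * y (k - int i)"
        unfolding a_def b_def by (simp only: ac_simps)
      also have "\<dots> = complex_of_real (t ^ n / fact n) * (dc n i * y (k - int i))"
        unfolding c dc_def by (simp only: ac_simps)
      finally show ?thesis .
    qed
    hence "(\<Sum>i\<le>n. a i * b (n - i)) = (\<Sum>i\<le>n. complex_of_real (t ^ n / fact n) * (dc n i * y (k - int i)))"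
      by (intro sum.cong) auto
    thus ?thesis by (simp add: gen_pow sum_distrib_left)
  qed
  have "sol y t k = (\<Sum>i. a i) * complex_of_real (exp (-t))"
    using sums_unique[OF cp] unfolding sol_def tm bsum by simp
  also have "\<dots> = (\<Sum>i. a i * complex_of_real (exp (-t)))"
    using suminf_mult2[OF summable_norm_cancel[OF sa]] by simp
  also have "\<dots> = P t y k" unfolding P_def a_def pw_def
    by (simp add: algebra_simps)
  finally show ?thesis .
qed



lemma sums_norm_le:
  fixes f :: "nat \<Rightarrow> 'a::banach"
  assumes f: "f sums s" and g: "g sums G" and le: "\<And>i. norm (f i) \<le> g i"
  shows "norm s \<le> G"
proof -
  have sn: "summable (\<lambda>i. norm (f i))"
    by (rule summable_comparison_test'[OF sums_summable[OF g], of 0]) (use le in auto)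
  have "norm s \<le> (\<Sum>i. norm (f i))" using summable_norm[OF sn] f by (simp add: sums_iff)
  also have "\<dots> \<le> G" using sums_le[OF le summable_sums[OF sn] g] .
  finally show ?thesis .
qed

definition avg :: "nat \<Rightarrow> (int \<Rightarrow> complex) \<Rightarrow> int \<Rightarrow> complex" where
  "avg n y k = (\<Sum>j = 1..n. y (k - int j)) / of_nat n"

lemma tele_id:
  fixes y :: "int \<Rightarrow> complex"
  shows "(\<Sum>j = 1..N. (y (k - int j) - y (k - int j - int i))) =
   (\<Sum>l<i. (y (k - 1 - int l) - y (k - int N - 1 - int l)))"
proof (induction N)
  case 0 then show ?case by simp
next
  case (Suc N)
  have tl: "(\<Sum>l<i. (y (k - int N - 1 - int l) - y (k - int N - 1 - int (Suc l)))) =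
            y (k - int N - 1 - int 0) - y (k - int N - 1 - int i)"
    by (rule sum_lessThan_telescope'[where f="\<lambda>l. y (k - int N - 1 - int l)"])
  have "(\<Sum>j = 1..Suc N. (y (k - int j) - y (k - int j - int i))) =
        (\<Sum>l<i. (y (k - 1 - int l) - y (k - int N - 1 - int l))) +
        (y (k - int N - 1) - y (k - int N - 1 - int i))"
    using Suc by (simp add: algebra_simps)
  also have "\<dots> = (\<Sum>l<i. (y (k - 1 - int l) - y (k - int N - 1 - int l))) +
        (\<Sum>l<i. (y (k - int N - 1 - int l) - y (k - int N - 1 - int (Suc l))))"
    using tl by simp
  also have "\<dots> = (\<Sum>l<i. (y (k - 1 - int l) - y (k - int (Suc N) - 1 - int l)))"
    by (simp add: sum.distrib[symmetric] algebra_simps)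
  finally show ?case .
qed

lemma tele_bound:
  fixes y :: "int \<Rightarrow> complex"
  assumes B: "\<And>m. norm (y m) \<le> B"
  shows "norm (\<Sum>j = 1..N. (y (k - int j) - y (k - int j - int i))) \<le> 2 * real i * B"
proof -
  have "norm (\<Sum>l<i. (y (k - 1 - int l) - y (k - int N - 1 - int l))) \<le> (\<Sum>l<i. 2 * B)"
  proof (rule sum_norm_le)
    fix l
    show "norm (y (k - 1 - int l) - y (k - int N - 1 - int l)) \<le> 2 * B"
      using norm_triangle_ineq4[of "y (k - 1 - int l)" "y (k - int N - 1 - int l)"]
        B[of "k - 1 - int l"] B[of "k - int N - 1 - int l"] by linarith
  qed
  thus ?thesis unfolding tele_id by simp
qed

lemma V_nonneg: "t > 0 \<Longrightarrow> V t \<ge> 0"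
  using V_bound[of t] pw_nonneg[of t 0] unfolding V_def
  by (auto intro!: add_nonneg_nonneg suminf_nonneg)

lemma P_avg:
  assumes t: "t \<ge> 0" and B: "\<And>m. norm (y m) \<le> B"
  shows "(\<Sum>j = 1..N. P t y (k - int j)) / of_nat N = P t (avg N y) k"
proof -
  have "(\<lambda>i. \<Sum>j\<in>{1..N}. complex_of_real (pw t i) * y (k - int j - int i)) sums (\<Sum>j\<in>{1..N}. P t y (k - int j))"
    by (rule sums_sum) (rule P_sums[OF t B])
  from sums_divide[OF this, of "of_nat N"]
  have "(\<lambda>i. complex_of_real (pw t i) * avg N y (k - int i)) sums ((\<Sum>j = 1..N. P t y (k - int j)) / of_nat N)"
    by (simp add: avg_def sum_distrib_left algebra_simps)
  thus ?thesis unfolding P_def by (simp add: sums_iff)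
qed

lemma dir_back:
  assumes t: "t > 0" and B: "\<And>m. norm (y m) \<le> B" and N: "N \<ge> 1"
    and e: "\<And>m. norm (avg N y m - c) \<le> e"
  shows "norm (P t y k - c) \<le> e + real N * (B * V t)"
proof -
  have t0: "t \<ge> 0" using t by simp
  have B0: "B \<ge> 0" using norm_ge_zero[of "y 0"] B[of 0] by linarith
  have BV: "B * V t \<ge> 0" using B0 V_nonneg[OF t] by simp
  have Npos: "real N > 0" using N by simp
  have dec: "P t y k - c = (\<Sum>j = 1..N. (P t y k - P t y (k - int j))) / of_nat N +
                          ((\<Sum>j = 1..N. P t y (k - int j)) / of_nat N - c)"
    using Npos by (simp add: sum_subtractf field_simps)
  have n1: "norm (\<Sum>j = 1..N. (P t y k - P t y (k - int j))) \<le> (\<Sum>j = 1..N. real N * (B * V t))"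
  proof (rule sum_norm_le)
    fix j assume "j \<in> {1..N}"
    hence "real j * (B * V t) \<le> real N * (B * V t)" using BV by (intro mult_right_mono) auto
    thus "norm (P t y k - P t y (k - int j)) \<le> real N * (B * V t)"
      using P_shift_j[where y=y and B=B and k=k and j=j, OF t B] by linarith
  qed
  hence n1': "norm ((\<Sum>j = 1..N. (P t y k - P t y (k - int j))) / of_nat N) \<le> real N * (B * V t)"
    using Npos by (simp add: norm_divide field_simps)
  have n2: "norm ((\<Sum>j = 1..N. P t y (k - int j)) / of_nat N - c) \<le> e"
    unfolding P_avg[OF t0 B] by (rule P_close[OF t0 e])
  show ?thesis unfolding dec
    using norm_triangle_ineq[of "(\<Sum>j = 1..N. (P t y k - P t y (k - int j))) / of_nat N"
        "(\<Sum>j = 1..N. P t y (k - int j)) / of_nat N - c"] n1' n2 by linarith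
qed

lemma dir_fwd:
  assumes t: "t > 0" and B: "\<And>m. norm (y m) \<le> B" and N: "N \<ge> 1"
    and e: "\<And>m. norm (P t y m - c) \<le> e"
  shows "norm (avg N y k - c) \<le> e + 2 * B * t / real N"
proof -
  have t0: "t \<ge> 0" using t by simp
  have Npos: "real N > 0" using N by simp
  have dec: "avg N y k - c = (\<Sum>j = 1..N. (y (k - int j) - P t y (k - int j))) / of_nat N +
                          (\<Sum>j = 1..N. (P t y (k - int j) - c)) / of_nat N"
    using Npos by (simp add: avg_def sum_subtractf field_simps)
  have n2: "norm (\<Sum>j = 1..N. (P t y (k - int j) - c)) \<le> (\<Sum>j = 1..N. e)"
    by (rule sum_norm_le) (rule e)
  hence n2': "norm ((\<Sum>j = 1..N. (P t y (k - int j) - c)) / of_nat N) \<le> e"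
    using Npos by (simp add: norm_divide field_simps)
  have s1: "(\<lambda>i. complex_of_real (pw t i) * (y m - y (m - int i))) sums (y m - P t y m)" for m
    using sums_diff[OF pw_c_sums[of t "y m"] P_sums[where y=y and B=B and k=m, OF t0 B]] by (simp add: algebra_simps)
  have s2: "(\<lambda>i. \<Sum>j\<in>{1..N}. complex_of_real (pw t i) * (y (k - int j) - y (k - int j - int i)))
            sums (\<Sum>j\<in>{1..N}. (y (k - int j) - P t y (k - int j)))"
    by (rule sums_sum) (rule s1)
  have g: "(\<lambda>i. 2 * B * (real i * pw t i)) sums (2 * B * t)"
    by (rule sums_mult[OF pw_m1_sums])
  have n1: "norm (\<Sum>j\<in>{1..N}. (y (k - int j) - P t y (k - int j))) \<le> 2 * B * t"
  proof (rule sums_norm_le[OF s2 g])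
    fix i
    have "norm (\<Sum>j\<in>{1..N}. complex_of_real (pw t i) * (y (k - int j) - y (k - int j - int i)))
          = pw t i * norm (\<Sum>j\<in>{1..N}. (y (k - int j) - y (k - int j - int i)))"
      using pw_nonneg[OF t0, of i] by (simp add: sum_distrib_left[symmetric] norm_mult)
    also have "\<dots> \<le> pw t i * (2 * real i * B)"
      using tele_bound[where y=y and B=B and N=N and k=k and i=i, OF B] pw_nonneg[OF t0, of i] by (intro mult_left_mono) auto
    finally show "norm (\<Sum>j\<in>{1..N}. complex_of_real (pw t i) * (y (k - int j) - y (k - int j - int i)))
          \<le> 2 * B * (real i * pw t i)" by (simp add: algebra_simps)
  qed
  hence n1': "norm ((\<Sum>j = 1..N. (y (k - int j) - P t y (k - int j))) / of_nat N) \<le> 2 * B * t / real N"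
    using Npos by (simp add: norm_divide divide_right_mono)
  show ?thesis unfolding dec
    using norm_triangle_ineq[of "(\<Sum>j = 1..N. (y (k - int j) - P t y (k - int j))) / of_nat N"
        "(\<Sum>j = 1..N. (P t y (k - int j) - c)) / of_nat N"] n1' n2' by linarith
qed



lemma cesaro_to_sol:
  assumes B: "\<And>m. norm (y m) \<le> B"
    and U: "uniform_limit UNIV (\<lambda>n k. (\<Sum>j = 1..n. y (k - int j)) / of_nat n) (\<lambda>_. c) sequentially"
  shows "uniform_limit UNIV (sol y) (\<lambda>_. c) at_top"
proof (rule uniform_limitI)
  fix e :: real assume e: "e > 0"
  have B0: "B \<ge> 0" using norm_ge_zero[of "y 0"] B[of 0] by linarith
  from U e obtain N0 where N0: "\<And>n k. n \<ge> N0 \<Longrightarrow> dist ((\<Sum>j = 1..n. y (k - int j)) / of_nat n) c < e/2"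
    unfolding uniform_limit_sequentially_iff by (meson half_gt_zero UNIV_I)
  define N where "N = max N0 1"
  have N1: "N \<ge> 1" and NN0: "N \<ge> N0" by (auto simp: N_def)
  have avgN: "norm (avg N y m - c) \<le> e/2" for m
    using N0[OF NN0, of m] by (simp add: avg_def dist_norm)
  define d where "d = e / (2 * (real N * (B + 1)))"
  have d: "d > 0" using e N1 B0 by (simp add: d_def)
  show "\<forall>\<^sub>F t in at_top. \<forall>k\<in>UNIV. dist (sol y t k) c < e"
    using V_small[OF d]
  proof eventually_elim
    case (elim t)
    hence t: "t > 0" and Vt: "V t < d" by auto
    have V0: "V t \<ge> 0" by (rule V_nonneg[OF t])
    have "real N * (B * V t) \<le> real N * ((B + 1) * V t)"
      using V0 N1 by (intro mult_left_mono) (auto simp: algebra_simps)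
    also have "\<dots> < real N * ((B + 1) * d)"
      using Vt N1 B0 by (intro mult_strict_left_mono) auto
    also have "\<dots> = e / 2"
    proof -
      have "real N * (B + 1) > 0" using N1 B0 by (intro mult_pos_pos) auto
      thus ?thesis by (simp add: d_def field_simps)
    qed
    finally have small: "real N * (B * V t) < e/2" .
    show ?case
    proof
      fix k
      have "norm (P t y k - c) \<le> e/2 + real N * (B * V t)"
        by (rule dir_back[OF t B N1 avgN])
      thus "dist (sol y t k) c < e"
        using sol_eq_P[where y=y and B=B and t=t and k=k, OF _ B] t small by (simp add: dist_norm)
    qed
  qed
qed

theorem theorem1:
  fixes x0 :: "int \<Rightarrow> complex"
  assumes "bounded (range x0)"
  shows "(good x0 \<longleftrightarrow>
           (\<exists>c :: complex. uniform_limit UNIV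
              (\<lambda>n k. (\<Sum>j = 1..n. x0 (k - int j)) / of_nat n) (\<lambda>_. c) sequentially))
       \<and> (\<forall>c :: complex. uniform_limit UNIV
              (\<lambda>n k. (\<Sum>j = 1..n. x0 (k - int j)) / of_nat n) (\<lambda>_. c) sequentially
            \<longrightarrow> uniform_limit UNIV (sol x0) (\<lambda>_. c) at_top)"
proof -
  from assms obtain B where B: "\<And>m. norm (x0 m) \<le> B"
    unfolding bounded_iff by auto
  have B0: "B \<ge> 0" using norm_ge_zero[of "x0 0"] B[of 0] by linarith
  have part3: "\<forall>c :: complex. uniform_limit UNIV
              (\<lambda>n k. (\<Sum>j = 1..n. x0 (k - int j)) / of_nat n) (\<lambda>_. c) sequentially
            \<longrightarrow> uniform_limit UNIV (sol x0) (\<lambda>_. c) at_top"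
    using cesaro_to_sol[where y=x0 and B=B, OF B] by blast
  have fwd: "\<exists>c :: complex. uniform_limit UNIV
              (\<lambda>n k. (\<Sum>j = 1..n. x0 (k - int j)) / of_nat n) (\<lambda>_. c) sequentially"
    if g: "good x0"
  proof -
    from g obtain cf where cf: "uniform_limit UNIV (sol x0) cf at_top" unfolding good_def by blast
    have ev: "\<forall>\<^sub>F t in at_top. \<forall>m. dist (sol x0 t m) (cf m) < e" if "e > 0" for e
      using uniform_limitD[OF cf that] by simp
    have step: "cf k = cf (k - 1)" for k
    proof -
      have "norm (cf k - cf (k - 1)) \<le> e" if e: "e > 0" for e
      proof -
        have e3: "e / 3 > 0" and e3': "e / (3 * (B + 1)) > 0" using e B0 by auto
        have "\<forall>\<^sub>F t in at_top. (\<forall>m. dist (sol x0 t m) (cf m) < e/3) \<and> (t > 0 \<and> V t < e / (3 * (B + 1)))"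
          using ev[OF e3] V_small[OF e3'] by (rule eventually_conj)
        hence "\<exists>t. (\<forall>m. dist (sol x0 t m) (cf m) < e/3) \<and> (t > 0 \<and> V t < e / (3 * (B + 1)))"
          by (intro eventually_happens') simp_all
        then obtain t where t: "t > 0" and Vt: "V t < e / (3 * (B + 1))"
          and close: "\<And>m. dist (sol x0 t m) (cf m) < e/3"
          by blast
        have V0: "V t \<ge> 0" by (rule V_nonneg[OF t])
        have "B * V t \<le> (B + 1) * V t" using V0 by (simp add: algebra_simps)
        also have "\<dots> \<le> (B + 1) * (e / (3 * (B + 1)))" using Vt B0 by (intro mult_left_mono) auto
        also have "\<dots> = e / 3" using B0 by (simp add: field_simps)
        finally have bv: "B * V t \<le> e / 3" .
        have sh: "norm (P t x0 k - P t x0 (k - 1)) \<le> B * V t" by (rule P_shift[OF t B])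
        have c1: "norm (P t x0 k - cf k) < e/3" using close[of k] sol_eq_P[where y=x0 and B=B, OF _ B] t
          by (simp add: dist_norm)
        have c2: "norm (P t x0 (k - 1) - cf (k - 1)) < e/3" using close[of "k - 1"] sol_eq_P[where y=x0 and B=B, OF _ B] t
          by (simp add: dist_norm)
        have "norm (cf k - cf (k - 1)) \<le> norm (P t x0 k - cf k) + norm (P t x0 k - P t x0 (k - 1)) + norm (P t x0 (k - 1) - cf (k - 1))"
        proof -
          have eq: "cf k - cf (k - 1) = - (P t x0 k - cf k) + (P t x0 k - P t x0 (k - 1)) + (P t x0 (k - 1) - cf (k - 1))"
            by (simp add: algebra_simps)
          show ?thesis unfolding eq
            by (rule order_trans[OF norm_triangle_ineq add_right_mono[OF order_trans[OF norm_triangle_ineq]]]) (simp add: norm_minus_commute)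
        qed
        thus ?thesis using sh bv c1 c2 by linarith
      qed
      hence "norm (cf k - cf (k - 1)) \<le> 0"
        by (rule field_le_epsilon) simp
      thus ?thesis by simp
    qed
    have const: "cf k = cf 0" for k
    proof (induction k rule: int_induct[where k=0])
      case base then show ?case by simp
    next
      case (step1 i) then show ?case using step[of "i + 1"] by (metis add_diff_cancel_right')
    next
      case (step2 i) then show ?case using step[of i] by metis
    qed
    define c where "c = cf 0"
    have const': "cf k = c" for k using const[of k] by (simp add: c_def)
    have Pc: "\<forall>\<^sub>F t in at_top. t > 0 \<and> (\<forall>m. norm (P t x0 m - c) < e)" if "e > 0" for e
      using ev[OF that] eventually_gt_at_top[of 0]
    proof eventually_elim
      case (elim t)
      thus ?case using sol_eq_P[where y=x0 and B=B and t=t, OF _ B]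
        by (auto simp: dist_norm const')
    qed
    have "uniform_limit UNIV (\<lambda>n k. (\<Sum>j = 1..n. x0 (k - int j)) / of_nat n) (\<lambda>_. c) sequentially"
      unfolding uniform_limit_sequentially_iff
    proof (intro allI impI)
      fix e :: real assume e: "e > 0"
      have "\<exists>t. t > 0 \<and> (\<forall>m. norm (P t x0 m - c) < e/2)"
        using e by (intro eventually_happens'[OF _ Pc]) simp_all
      then obtain t where t: "t > 0" and tc: "\<And>m. norm (P t x0 m - c) < e/2"
        by blast
      define N0 where "N0 = nat (ceiling (4 * B * t / e)) + 1"
      show "\<exists>N. \<forall>n\<ge>N. \<forall>x\<in>UNIV. dist ((\<Sum>j = 1..n. x0 (x - int j)) / of_nat n) c < e"
      proof (rule exI[of _ N0], intro allI impI ballI)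
        fix n k assume n: "n \<ge> N0"
        have n1: "n \<ge> 1" using n by (simp add: N0_def)
        have "real n > 4 * B * t / e" using n unfolding N0_def by linarith
        hence "4 * B * t < real n * e" using e by (simp add: field_simps)
        hence sm: "2 * B * t / real n < e / 2" using n1 by (simp add: field_simps)
        have "norm (avg n x0 k - c) \<le> e/2 + 2 * B * t / real n"
          by (rule dir_fwd[where y=x0 and B=B and N=n and t=t and c=c and e="e/2" and k=k, OF t B n1 less_imp_le[OF tc]])
        thus "dist ((\<Sum>j = 1..n. x0 (k - int j)) / of_nat n) c < e"
          using sm by (simp add: avg_def dist_norm)
      qed
    qed
    thus ?thesis by blast
  qed
  have bwd: "good x0" if "\<exists>c :: complex. uniform_limit UNIV
              (\<lambda>n k. (\<Sum>j = 1..n. x0 (k - int j)) / of_nat n) (\<lambda>_. c) sequentially"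
    using that part3 unfolding good_def by blast
  show ?thesis using fwd bwd part3 by blast
qed

end
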